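(* Let $R\subseteq\mathbb{R}^2$ be open and let $f:R\to\mathbb{R}^2$ be $C^1$. Let $R_0$ be a connected component of $R\setminus f^{-1}(f(S)\cup C(f))$, choose $z_0\in R_0$, let $w_0=f(z_0)$, and let $\Omega_0$ be the connected component of $\mathbb{R}^2\setminus(f(S)\cup C(f))$ containing $w_0$. Then $f(R_0)=\Omega_0$.
   Context: Write $f=(u,v)$; $J_f=u_xv_y-u_yv_x$ and $S=\{z\in R: J_f(z)=0\}$. $C(f)$ is the set of finite points $\zeta\in\mathbb{R}^2$ for which there is a sequence $(z_n)\subset R$ converging to a point of $\partial R$ or with $|z_n|\to\infty$, such that $f(z_n)\to\zeta$. *)

theory Defs
  imports "HOL-Analysis.Analysis"
begin

text \<open>The plane R^2 is modelled as real \<times> real; f = (u,v) with u = fst o f, v = snd o f.\<close>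

definition C1_on :: "(real \<times> real) set \<Rightarrow> (real \<times> real \<Rightarrow> real \<times> real) \<Rightarrow> bool" where
  "C1_on R f \<longleftrightarrow> (\<exists>D. (\<forall>z\<in>R. (f has_derivative D z) (at z)) \<and>
      continuous_on R (\<lambda>z. D z (1,0)) \<and> continuous_on R (\<lambda>z. D z (0,1)))"

definition jacobian_det :: "(real \<times> real \<Rightarrow> real \<times> real) \<Rightarrow> real \<times> real \<Rightarrow> real" where
  "jacobian_det f z = (let D = frechet_derivative f (at z) in
     fst (D (1,0)) * snd (D (0,1)) - fst (D (0,1)) * snd (D (1,0)))"

definition critical_set :: "(real \<times> real) set \<Rightarrow> (real \<times> real \<Rightarrow> real \<times> real) \<Rightarrow> (real \<times> real) set" where
  "critical_set R f = {z \<in> R. jacobian_det f z = 0}"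

definition cluster_set :: "(real \<times> real) set \<Rightarrow> (real \<times> real \<Rightarrow> real \<times> real) \<Rightarrow> (real \<times> real) set" where
  "cluster_set R f = {\<zeta>. \<exists>zs :: nat \<Rightarrow> real \<times> real. (\<forall>n. zs n \<in> R) \<and>
      ((\<exists>p\<in>frontier R. zs \<longlonglongrightarrow> p) \<or> filterlim (\<lambda>n. norm (zs n)) at_top sequentially) \<and>
      (\<lambda>n. f (zs n)) \<longlonglongrightarrow> \<zeta>}"

end

theory Submission
  imports Defs
begin

lemma subseq_split:
  assumes "\<forall>n. P n \<or> Q n"
  shows "\<exists>r. strict_mono (r::nat\<Rightarrow>nat) \<and> ((\<forall>n. P (r n)) \<or> (\<forall>n. Q (r n)))"
proof (cases "infinite {n. P n}")
  case True
  then show ?thesis using strict_mono_enumerate enumerate_in_set by blast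
next
  case False
  then obtain N where N: "\<forall>n\<in>{n. P n}. n < N" using finite_nat_bounded by (meson lessThan_iff subset_eq)
  have "infinite {n. Q n}"
  proof
    assume "finite {n. Q n}"
    then obtain M where M: "\<forall>n\<in>{n. Q n}. n < M" using finite_nat_bounded by (meson lessThan_iff subset_eq)
    have "P (N+M) \<or> Q (N+M)" using assms by blast
    then show False using N M by force
  qed
  then show ?thesis using strict_mono_enumerate enumerate_in_set by blast
qed

lemma cluster_subseq:
  fixes R :: "(real \<times> real) set" and f :: "real \<times> real \<Rightarrow> real \<times> real"
  assumes zR: "\<forall>n. z n \<in> R" and lim: "(\<lambda>n. f (z n)) \<longlonglongrightarrow> w"
    and nc: "w \<notin> cluster_set R f" and "open R"
  shows "\<exists>r p. strict_mono r \<and> p \<in> R \<and> (z \<circ> r) \<longlonglongrightarrow> p"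
proof (cases "\<exists>M. infinite {n. norm (z n) \<le> M}")
  case True
  then obtain M where inf: "infinite {n. norm (z n) \<le> M}" by blast
  define e where "e = enumerate {n. norm (z n) \<le> M}"
  have se: "strict_mono e" unfolding e_def using strict_mono_enumerate[OF inf] .
  have inb: "\<forall>n. (z \<circ> e) n \<in> cball 0 M" unfolding e_def using enumerate_in_set[OF inf] by auto
  obtain r' p where r': "strict_mono r'" "p \<in> cball 0 M" "((z \<circ> e) \<circ> r') \<longlonglongrightarrow> p"
    using compact_imp_seq_compact[OF compact_cball] inb unfolding seq_compact_def by metis
  have sm: "strict_mono (e \<circ> r')" using se r'(1) by (simp add: strict_mono_o)
  have pc: "p \<in> closure R" unfolding closure_sequential
    using r'(3) zR by (intro exI[of _ "z \<circ> e \<circ> r'"]) simp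
  show ?thesis
  proof (cases "p \<in> R")
    case True
    then show ?thesis using sm r'(3) by (metis comp_assoc)
  next
    case False
    then have pf: "p \<in> frontier R" using pc \<open>open R\<close> by (simp add: frontier_def interior_open)
    have "(\<lambda>n. f ((z \<circ> (e \<circ> r')) n)) \<longlonglongrightarrow> w"
      using LIMSEQ_subseq_LIMSEQ[OF lim sm] by (simp add: comp_def)
    then have "w \<in> cluster_set R f" unfolding cluster_set_def
      using zR pf r'(3) by (auto simp: comp_assoc intro!: exI[of _ "z \<circ> (e \<circ> r')"])
    then show ?thesis using nc by blast
  qed
next
  case False
  have "filterlim (\<lambda>n. norm (z n)) at_top sequentially"
    unfolding filterlim_at_top
  proof
    fix M
    have "finite {n. norm (z n) \<le> M}" using False by blast
    then obtain N where N: "\<forall>n\<in>{n. norm (z n) \<le> M}. n < N" using finite_nat_bounded by (meson lessThan_iff subset_eq)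
    show "\<forall>\<^sub>F n in sequentially. M \<le> norm (z n)"
      unfolding eventually_sequentially
    proof (intro exI[of _ N] allI impI)
      fix n assume "N \<le> n"
      then show "M \<le> norm (z n)" using N by (metis linorder_not_le mem_Collect_eq nle_le)
    qed
  qed
  then have "w \<in> cluster_set R f" unfolding cluster_set_def using zR lim by blast
  then show ?thesis using nc by blast
qed

lemma pick_point:
  fixes R :: "(real \<times> real) set" and f :: "real \<times> real \<Rightarrow> real \<times> real"
  assumes "x \<in> f ` critical_set R f \<union> cluster_set R f"
  shows "\<exists>y. y \<in> R \<and> dist (f y) x < inverse (real (Suc n)) \<and>
     (y \<in> critical_set R f \<or> (\<exists>q\<in>frontier R. dist y q < inverse (real (Suc n))) \<or> norm y > real n)"
proof (cases "x \<in> f ` critical_set R f")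
  case True
  then obtain y where "y \<in> critical_set R f" "x = f y" by blast
  then show ?thesis unfolding critical_set_def by (intro exI[of _ y]) auto
next
  case False
  then have "x \<in> cluster_set R f" using assms by blast
  then obtain zs where zs: "\<forall>k. zs k \<in> R" "(\<exists>p\<in>frontier R. zs \<longlonglongrightarrow> p) \<or> filterlim (\<lambda>k. norm (zs k)) at_top sequentially"
     "(\<lambda>k. f (zs k)) \<longlonglongrightarrow> x" unfolding cluster_set_def by blast
  have ep: "inverse (real (Suc n)) > 0" by simp
  have e1: "\<forall>\<^sub>F k in sequentially. dist (f (zs k)) x < inverse (real (Suc n))"
    using zs(3) ep by (rule tendstoD)
  have e2: "\<forall>\<^sub>F k in sequentially. ((\<exists>q\<in>frontier R. dist (zs k) q < inverse (real (Suc n))) \<or> norm (zs k) > real n)"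
    using zs(2)
  proof
    assume "\<exists>p\<in>frontier R. zs \<longlonglongrightarrow> p"
    then obtain p where p: "p \<in> frontier R" "zs \<longlonglongrightarrow> p" by blast
    have "\<forall>\<^sub>F k in sequentially. dist (zs k) p < inverse (real (Suc n))"
      using p(2) ep by (rule tendstoD)
    then show ?thesis by eventually_elim (use p(1) in blast)
  next
    assume "filterlim (\<lambda>k. norm (zs k)) at_top sequentially"
    then have "\<forall>\<^sub>F k in sequentially. norm (zs k) > real n"
      by (simp add: filterlim_at_top_dense)
    then show ?thesis by eventually_elim blast
  qed
  from eventually_happens'[OF _ eventually_conj[OF e1 e2]]
  obtain k where "dist (f (zs k)) x < inverse (real (Suc n))"
     "(\<exists>q\<in>frontier R. dist (zs k) q < inverse (real (Suc n))) \<or> norm (zs k) > real n" by auto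
  then show ?thesis using zs(1) by (intro exI[of _ "zs k"]) auto
qed

lemma B_closed:
  fixes R :: "(real \<times> real) set" and f :: "real \<times> real \<Rightarrow> real \<times> real"
  assumes "open R" and cf: "continuous_on R f" and cJ: "continuous_on R (jacobian_det f)"
  shows "closed (f ` critical_set R f \<union> cluster_set R f)" (is "closed ?B")
  unfolding closed_sequential_limits
proof (intro allI impI, elim conjE)
  fix x w assume xB: "\<forall>n. x n \<in> ?B" and xw: "x \<longlonglongrightarrow> w"
  show "w \<in> ?B"
  proof (rule ccontr)
    assume wB: "w \<notin> ?B"
    have "\<forall>n. \<exists>y. y \<in> R \<and> dist (f y) (x n) < inverse (real (Suc n)) \<and>
     (y \<in> critical_set R f \<or> (\<exists>q\<in>frontier R. dist y q < inverse (real (Suc n))) \<or> norm y > real n)"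
      using pick_point xB by blast
    then obtain y where yR: "\<forall>n. y n \<in> R" and yd: "\<forall>n. dist (f (y n)) (x n) < inverse (real (Suc n))"
      and yc: "\<forall>n. y n \<in> critical_set R f \<or> (\<exists>q\<in>frontier R. dist (y n) q < inverse (real (Suc n))) \<or> norm (y n) > real n"
      by metis
    have "(\<lambda>n. f (y n) - x n) \<longlonglongrightarrow> 0"
      by (rule Lim_null_comparison[OF _ LIMSEQ_inverse_real_of_nat])
         (use yd in \<open>auto simp: dist_norm intro!: always_eventually less_imp_le\<close>)
    then have fy: "(\<lambda>n. f (y n)) \<longlonglongrightarrow> w" using xw by (rule Lim_transform[rotated])
    obtain r p where r: "strict_mono r" "p \<in> R" "(y \<circ> r) \<longlonglongrightarrow> p"
      using cluster_subseq[OF yR fy _ \<open>open R\<close>] wB by blast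
    have yc': "\<forall>n. y (r n) \<in> critical_set R f \<or> ((\<exists>q\<in>frontier R. dist (y (r n)) q < inverse (real (Suc (r n)))) \<or> norm (y (r n)) > real (r n))"
      using yc by blast
    obtain s :: "nat \<Rightarrow> nat" where s: "strict_mono s" and
      sc: "(\<forall>n. y (r (s n)) \<in> critical_set R f) \<or>
           (\<forall>n. (\<exists>q\<in>frontier R. dist (y (r (s n))) q < inverse (real (Suc (r (s n))))) \<or> norm (y (r (s n))) > real (r (s n)))"
      using subseq_split[OF yc'] by blast
    have rs: "strict_mono (r \<circ> s)" using r(1) s by (simp add: strict_mono_o)
    have yrs: "(\<lambda>n. y (r (s n))) \<longlonglongrightarrow> p" using LIMSEQ_subseq_LIMSEQ[OF r(3) s] by (simp add: comp_def)
    have fyrs: "(\<lambda>n. f (y (r (s n)))) \<longlonglongrightarrow> w" using LIMSEQ_subseq_LIMSEQ[OF fy rs] by (simp add: comp_def)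
    have icf: "isCont f p" using cf \<open>open R\<close> r(2) continuous_on_eq_continuous_at by blast
    have icJ: "isCont (jacobian_det f) p" using cJ \<open>open R\<close> r(2) continuous_on_eq_continuous_at by blast
    have fp: "f p = w" using LIMSEQ_unique[OF isCont_tendsto_compose[OF icf yrs] fyrs] .
    have le: "\<And>n. n \<le> r (s n)" using seq_suble[OF rs] by simp
    from sc show False
    proof
      assume A: "\<forall>n. y (r (s n)) \<in> critical_set R f"
      have "(\<lambda>n. jacobian_det f (y (r (s n)))) \<longlonglongrightarrow> jacobian_det f p"
        using isCont_tendsto_compose[OF icJ yrs] .
      moreover have "(\<lambda>n. jacobian_det f (y (r (s n)))) = (\<lambda>n. 0)" using A unfolding critical_set_def by auto
      ultimately have "jacobian_det f p = 0" using LIMSEQ_unique tendsto_const by metis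
      then have "p \<in> critical_set R f" using r(2) unfolding critical_set_def by auto
      then show False using wB fp by blast
    next
      assume B: "\<forall>n. (\<exists>q\<in>frontier R. dist (y (r (s n))) q < inverse (real (Suc (r (s n))))) \<or> norm (y (r (s n))) > real (r (s n))"
      obtain t :: "nat \<Rightarrow> nat" where t: "strict_mono t" and
        tc: "(\<forall>n. \<exists>q\<in>frontier R. dist (y (r (s (t n)))) q < inverse (real (Suc (r (s (t n)))))) \<or>
           (\<forall>n. norm (y (r (s (t n)))) > real (r (s (t n))))"
        using subseq_split[OF B] by blast
      have yrst: "(\<lambda>n. y (r (s (t n)))) \<longlonglongrightarrow> p" using LIMSEQ_subseq_LIMSEQ[OF yrs t] by (simp add: comp_def)
      have le2: "\<And>n. n \<le> r (s (t n))" using le seq_suble[OF t] order_trans by blast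
      from tc show False
      proof
        assume C: "\<forall>n. \<exists>q\<in>frontier R. dist (y (r (s (t n)))) q < inverse (real (Suc (r (s (t n)))))"
        then obtain q where q: "\<forall>n. q n \<in> frontier R"
          "\<forall>n. dist (y (r (s (t n)))) (q n) < inverse (real (Suc (r (s (t n)))))" by metis
        have qd: "\<forall>n. dist (y (r (s (t n)))) (q n) \<le> inverse (real (Suc n))"
        proof
          fix n
          have "inverse (real (Suc (r (s (t n))))) \<le> inverse (real (Suc n))"
            using le2[of n] by (simp add: le_imp_inverse_le)
          then show "dist (y (r (s (t n)))) (q n) \<le> inverse (real (Suc n))" using q(2) less_imp_le order_trans by blast
        qed
        have "(\<lambda>n. q n - y (r (s (t n)))) \<longlonglongrightarrow> 0"
          by (rule Lim_null_comparison[OF _ LIMSEQ_inverse_real_of_nat])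
             (use qd in \<open>auto simp: dist_norm norm_minus_commute intro!: always_eventually\<close>)
        then have "q \<longlonglongrightarrow> p" using yrst by (rule Lim_transform[rotated])
        then have "p \<in> frontier R" using q(1) closed_sequential_limits[of "frontier R"] frontier_closed by blast
        then show False using r(2) \<open>open R\<close> by (simp add: frontier_def interior_open)
      next
        assume C: "\<forall>n. norm (y (r (s (t n)))) > real (r (s (t n)))"
        have "Bseq (\<lambda>n. y (r (s (t n))))" using yrst convergent_imp_Bseq convergent_def by blast
        then obtain K where K: "\<forall>n. norm (y (r (s (t n)))) \<le> K" unfolding Bseq_def by auto
        obtain n where n: "K < real n" using reals_Archimedean2 by blast
        have "real n \<le> real (r (s (t n)))" using le2[of n] by simp
        then show False using K C n by (meson le_less_trans less_le_not_le order_trans)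
      qed
    qed
  qed
qed

lemma lin_decomp:
  assumes "linear L"
  shows "L (x, y) = x *\<^sub>R L (1,0) + y *\<^sub>R L (0,1)"
proof -
  have "(x, y) = x *\<^sub>R (1::real,0::real) + y *\<^sub>R (0,1)" by simp
  then show ?thesis using assms by (metis linear_add linear_scale)
qed

lemma right_inverse_2:
  fixes L :: "real \<times> real \<Rightarrow> real \<times> real"
  assumes bl: "bounded_linear L"
    and dt: "fst (L (1,0)) * snd (L (0,1)) - fst (L (0,1)) * snd (L (1,0)) \<noteq> 0"
  shows "\<exists>g. bounded_linear g \<and> L \<circ> g = id"
proof -
  define a where "a = fst (L (1,0))"
  define b where "b = fst (L (0,1))"
  define c where "c = snd (L (1,0))"
  define d where "d = snd (L (0,1))"
  define k where "k = a*d - b*c"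
  have k: "k \<noteq> 0" using dt unfolding k_def a_def b_def c_def d_def by simp
  define g where "g = (\<lambda>v::real\<times>real. ((d * fst v - b * snd v) / k, (a * snd v - c * fst v) / k))"
  have "linear g" unfolding g_def
  proof (rule linearI)
    fix u v :: "real \<times> real"
    show "((d * fst (u + v) - b * snd (u + v)) / k, (a * snd (u + v) - c * fst (u + v)) / k) =
      ((d * fst u - b * snd u) / k, (a * snd u - c * fst u) / k) + ((d * fst v - b * snd v) / k, (a * snd v - c * fst v) / k)"
      by (simp add: divide_simps) (simp add: algebra_simps)
  next
    fix r :: real and u :: "real \<times> real"
    show "((d * fst (r *\<^sub>R u) - b * snd (r *\<^sub>R u)) / k, (a * snd (r *\<^sub>R u) - c * fst (r *\<^sub>R u)) / k) =
      r *\<^sub>R ((d * fst u - b * snd u) / k, (a * snd u - c * fst u) / k)"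
      by (simp add: divide_simps) (simp add: algebra_simps)
  qed
  then have "bounded_linear g" by (simp add: linear_conv_bounded_linear)
  moreover have "L \<circ> g = id"
  proof
    fix v :: "real \<times> real"
    obtain p q where v: "v = (p, q)" by (cases v)
    have lin: "linear L" using bl bounded_linear.linear by blast
    have "L (g v) = ((d * p - b * q) / k) *\<^sub>R L (1,0) + ((a * q - c * p) / k) *\<^sub>R L (0,1)"
      unfolding g_def v fst_conv snd_conv by (rule lin_decomp[OF lin])
    also have "\<dots> = ((d * p - b * q) / k) *\<^sub>R (a, c) + ((a * q - c * p) / k) *\<^sub>R (b, d)"
      unfolding a_def b_def c_def d_def by simp
    also have "\<dots> = (((d * p - b * q) * a + (a * q - c * p) * b) / k, ((d * p - b * q) * c + (a * q - c * p) * d) / k)"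
      by (simp add: add_divide_distrib)
    also have "((d * p - b * q) * a + (a * q - c * p) * b) = k * p" unfolding k_def by algebra
    also have "((d * p - b * q) * c + (a * q - c * p) * d) = k * q" unfolding k_def by algebra
    also have "(k * p / k, k * q / k) = (p, q)" using k by simp
    finally show "(L \<circ> g) v = id v" using v by simp
  qed
  ultimately show ?thesis by blast
qed

theorem theorem3p10:
  fixes R R0 :: "(real \<times> real) set" and f :: "real \<times> real \<Rightarrow> real \<times> real" and z0 :: "real \<times> real"
  assumes "open R" and "C1_on R f"
    and "R0 \<in> components (R - f -` (f ` critical_set R f \<union> cluster_set R f))"
    and "z0 \<in> R0"
  shows "f ` R0 = connected_component_set (UNIV - (f ` critical_set R f \<union> cluster_set R f)) (f z0)"
proof -
  obtain D where der: "\<forall>z\<in>R. (f has_derivative D z) (at z)" and c1: "continuous_on R (\<lambda>z. D z (1,0))"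
    and c2: "continuous_on R (\<lambda>z. D z (0,1))" using assms(2) unfolding C1_on_def by blast
  define B where "B = f ` critical_set R f \<union> cluster_set R f"
  define U where "U = R - f -` B"
  define W where "W = connected_component_set (UNIV - B) (f z0)"
  have cf: "continuous_on R f" using der
    by (meson continuous_at_imp_continuous_on has_derivative_continuous)
  have Jeq: "jacobian_det f z = fst (D z (1,0)) * snd (D z (0,1)) - fst (D z (0,1)) * snd (D z (1,0))"
    if "z \<in> R" for z
  proof -
    have "D z = frechet_derivative f (at z)" using der that frechet_derivative_at by blast
    then show ?thesis unfolding jacobian_det_def Let_def by simp
  qed
  have "continuous_on R (\<lambda>z. fst (D z (1,0)) * snd (D z (0,1)) - fst (D z (0,1)) * snd (D z (1,0)))"
    by (intro continuous_intros c1 c2)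
  then have cJ: "continuous_on R (jacobian_det f)" by (rule continuous_on_eq) (simp add: Jeq)
  have Bc: "closed B" unfolding B_def by (rule B_closed[OF assms(1) cf cJ])
  have UE: "U = R \<inter> f -` (- B)" unfolding U_def by blast
  have oU: "open U" unfolding UE using continuous_open_preimage[OF cf assms(1)] Bc by blast
  have R0c: "R0 \<in> components U" using assms(3) unfolding U_def B_def .
  have oR0: "open R0" using open_components[OF oU R0c] .
  have cR0: "connected R0" using in_components_connected[OF R0c] .
  have sR0: "R0 \<subseteq> U" using in_components_subset[OF R0c] .
  have R0eq: "R0 = connected_component_set U z0"
    using R0c assms(4) by (metis components_iff connected_component_eq mem_Collect_eq)
  have sub: "f ` R0 \<subseteq> W" unfolding W_def
  proof (rule connected_component_maximal)
    show "f z0 \<in> f ` R0" using assms(4) by blast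
    show "connected (f ` R0)"
      using connected_continuous_image[OF continuous_on_subset[OF cf] cR0] sR0 unfolding U_def by blast
    show "f ` R0 \<subseteq> UNIV - B" using sR0 unfolding U_def by blast
  qed
  have opf: "open (f ` R0)"
  proof -
    have "f ` R0 \<subseteq> interior (f ` R0)"
    proof
      fix w assume "w \<in> f ` R0"
      then obtain z where z: "z \<in> R0" "w = f z" by blast
      have zR: "z \<in> R" and fzB: "f z \<notin> B" using z sR0 unfolding U_def by auto
      have "jacobian_det f z \<noteq> 0" using zR fzB unfolding B_def critical_set_def by auto
      then have dt: "fst (D z (1,0)) * snd (D z (0,1)) - fst (D z (0,1)) * snd (D z (1,0)) \<noteq> 0"
        using Jeq[OF zR] by simp
      have dz: "(f has_derivative D z) (at z)" using der zR by blast
      have bl: "bounded_linear (D z)" using has_derivative_bounded_linear[OF dz] .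
      obtain g where g: "bounded_linear g" "D z \<circ> g = id" using right_inverse_2[OF bl dt] by blast
      have "R0 \<subseteq> R" using sR0 unfolding U_def by blast
      moreover have "z \<in> interior R0" using z(1) oR0 by (simp add: interior_open)
      ultimately show "w \<in> interior (f ` R0)"
        using sussmann_open_mapping[OF assms(1) cf zR dz g] z(2) by blast
    qed
    then show ?thesis by (metis interior_eq interior_subset subset_antisym)
  qed
  have clo: "w \<in> f ` R0" if wW: "w \<in> W" and wc: "w \<in> closure (f ` R0)" for w
  proof -
    have wB: "w \<notin> B" using wW connected_component_subset unfolding W_def by blast
    obtain zz where zz: "\<forall>n. zz n \<in> f ` R0" "zz \<longlonglongrightarrow> w" using wc unfolding closure_sequential by blast
    have "\<forall>n. \<exists>y. y \<in> R0 \<and> zz n = f y" using zz(1) by blast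
    then obtain x where x: "\<forall>n. x n \<in> R0 \<and> zz n = f (x n)" using choice[of "\<lambda>n y. y \<in> R0 \<and> zz n = f y"] by blast
    have xR: "\<forall>n. x n \<in> R" using x sR0 unfolding U_def by blast
    have "(\<lambda>n. f (x n)) = zz" using x by auto
    then have fx: "(\<lambda>n. f (x n)) \<longlonglongrightarrow> w" using zz(2) by simp
    obtain r p where r: "strict_mono r" "p \<in> R" "(x \<circ> r) \<longlonglongrightarrow> p"
      using cluster_subseq[OF xR fx _ assms(1)] wB unfolding B_def by blast
    have icf: "isCont f p" using cf assms(1) r(2) continuous_on_eq_continuous_at by blast
    have "(\<lambda>n. f ((x \<circ> r) n)) \<longlonglongrightarrow> f p" using isCont_tendsto_compose[OF icf r(3)] .
    moreover have "(\<lambda>n. f ((x \<circ> r) n)) \<longlonglongrightarrow> w" using LIMSEQ_subseq_LIMSEQ[OF fx r(1)] by (simp add: comp_def)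
    ultimately have fp: "f p = w" using LIMSEQ_unique by blast
    have pU: "p \<in> U" using r(2) fp wB unfolding U_def by blast
    have pcl: "p \<in> closure R0" unfolding closure_sequential
      using r(3) x by (intro exI[of _ "x \<circ> r"]) simp
    have oC: "open (connected_component_set U p)" using open_connected_component[OF oU] .
    have "p \<in> connected_component_set U p" using pU by simp
    then have "connected_component_set U p \<inter> closure R0 \<noteq> {}" using pcl by blast
    then have "connected_component_set U p \<inter> R0 \<noteq> {}" using open_Int_closure_eq_empty[OF oC] by blast
    then obtain y where y: "connected_component U p y" "connected_component U z0 y" using R0eq by blast
    have "connected_component U z0 p" using connected_component_trans[OF y(2) connected_component_sym[OF y(1)]] .
    then have "p \<in> R0" using R0eq by simp
    then show ?thesis using fp by blast
  qed
  have cW: "connected W" unfolding W_def by (rule connected_connected_component)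
  have "openin (top_of_set W) (f ` R0)" unfolding openin_open using sub opf by blast
  moreover have "closedin (top_of_set W) (f ` R0)" unfolding closedin_closed
    using sub clo closure_subset by (intro exI[of _ "closure (f ` R0)"]) blast
  ultimately have "f ` R0 = {} \<or> f ` R0 = W" using connected_clopen[THEN iffD1, OF cW, rule_format] by blast
  then show ?thesis using assms(4) unfolding W_def B_def by blast
qed

end
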